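(* Let $X,Y$ be Banach lattices and $S\colon X\to Y$ bounded and convex. Then $S$ is Lipschitz on bounded subsets: for every $r>0$ there exists $L>0$ with $\|Sx-Sy\|\le L\|x-y\|$ for all $x,y\in X$ with $\|x\|\le r$, $\|y\|\le r$.
   Context: An operator $S\colon X\to Y$ is convex if $S(\lambda x+(1-\lambda)y)\le\lambda Sx+(1-\lambda)Sy$ for all $x,y\in X$, $\lambda\in[0,1]$, and bounded if $\sup_{\|x\|\le r}\|Sx\|<\infty$ for every $r>0$. *)

theory Defs
  imports "HOL-Analysis.Analysis"
begin

text \<open>A (real) Banach lattice: a real Banach space carrying a lattice order that is
compatible with the vector structure (translation invariant, positive cone closed under
nonnegative scalars) and whose norm is a lattice norm:
|x| \<le> |y| implies norm x \<le> norm y, where |x| = sup x (-x).\<close>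

class banach_lattice = banach + lattice + ordered_ab_group_add +
  assumes scaleR_nonneg_nonneg_bl: "0 \<le> x \<Longrightarrow> 0 \<le> a \<Longrightarrow> 0 \<le> a *\<^sub>R x"
  assumes norm_lattice_mono: "sup x (- x) \<le> sup y (- y) \<Longrightarrow> norm x \<le> norm y"

definition convex_operator :: "('a::real_vector \<Rightarrow> 'b::{real_vector, order}) \<Rightarrow> bool" where
  "convex_operator S \<longleftrightarrow>
     (\<forall>x y. \<forall>l::real. 0 \<le> l \<and> l \<le> 1 \<longrightarrow>
        S (l *\<^sub>R x + (1 - l) *\<^sub>R y) \<le> l *\<^sub>R S x + (1 - l) *\<^sub>R S y)"

definition bounded_operator :: "('a::real_normed_vector \<Rightarrow> 'b::real_normed_vector) \<Rightarrow> bool" where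
  "bounded_operator S \<longleftrightarrow> (\<forall>r>0. \<exists>M. \<forall>x. norm x \<le> r \<longrightarrow> norm (S x) \<le> M)"

instance real :: banach_lattice
  by standard (auto simp: sup_real_def)

end

theory Submission
  imports Defs
begin

lemma bl_abs_nonneg:
  fixes q :: "'a::banach_lattice"
  shows "0 \<le> sup q (- q)"
proof -
  have "q \<le> sup q (- q)" "- q \<le> sup q (- q)" by auto
  hence "q + - q \<le> sup q (- q) + sup q (- q)" by (rule add_mono)
  hence "0 \<le> sup q (- q) + sup q (- q)" by simp
  hence "0 \<le> (1/2::real) *\<^sub>R (sup q (- q) + sup q (- q))"
    by (rule scaleR_nonneg_nonneg_bl) simp
  also have "(1/2::real) *\<^sub>R (sup q (- q) + sup q (- q)) = sup q (- q)"
    by (simp add: scaleR_add_right[symmetric] scaleR_add_left[symmetric])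
  finally show ?thesis .
qed

lemma bl_abs_of_nonneg:
  fixes a :: "'a::banach_lattice"
  assumes "0 \<le> a" shows "sup a (- a) = a"
proof -
  have "- a \<le> 0" using assms by simp
  hence "- a \<le> a" using assms by (rule order_trans)
  thus ?thesis by (simp add: sup_absorb1)
qed

lemma bl_norm_abs:
  fixes p :: "'a::banach_lattice"
  shows "norm (sup p (- p)) = norm p"
proof -
  have e: "sup (sup p (- p)) (- sup p (- p)) = sup p (- p)"
    by (rule bl_abs_of_nonneg[OF bl_abs_nonneg])
  show ?thesis
    by (rule antisym; rule norm_lattice_mono; simp add: e)
qed

lemma bl_key:
  fixes v p q :: "'a::banach_lattice"
  assumes "v \<le> p" "- q \<le> v"
  shows "norm v \<le> norm p + norm q"
proof -
  let ?P = "sup p (- p)" and ?Q = "sup q (- q)"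
  have P0: "0 \<le> ?P" and Q0: "0 \<le> ?Q" by (rule bl_abs_nonneg)+
  have "v \<le> ?P + ?Q"
  proof -
    have "v \<le> ?P" using assms(1) by (rule order_trans) simp
    also have "?P \<le> ?P + ?Q" using Q0 by simp
    finally show ?thesis .
  qed
  moreover have "- v \<le> ?P + ?Q"
  proof -
    have "- v \<le> q" using assms(2) by (simp add: minus_le_iff)
    also have "q \<le> ?Q" by simp
    also have "?Q \<le> ?P + ?Q" using P0 by simp
    finally show ?thesis .
  qed
  ultimately have "sup v (- v) \<le> ?P + ?Q" by simp
  also have "?P + ?Q = sup (?P + ?Q) (- (?P + ?Q))"
    by (rule bl_abs_of_nonneg[symmetric]) (rule add_nonneg_nonneg[OF P0 Q0])
  finally have "norm v \<le> norm (?P + ?Q)" by (rule norm_lattice_mono)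
  also have "\<dots> \<le> norm ?P + norm ?Q" by (rule norm_triangle_ineq)
  finally show ?thesis by (simp add: bl_norm_abs)
qed

lemma one_side:
  fixes S :: "'a::banach_lattice \<Rightarrow> 'b::banach_lattice"
  assumes conv: "convex_operator S" and d: "d = norm (x - y)" and dpos: "0 < d" and r: "0 < r"
  shows "S x - S y \<le> (d/(d+r)) *\<^sub>R (S (x + (r/d) *\<^sub>R (x - y)) - S y)"
proof -
  define z where "z = x + (r/d) *\<^sub>R (x - y)"
  define l where "l = d/(d+r)"
  have l01: "0 \<le> l" "l \<le> 1" using dpos r by (auto simp: l_def)
  have "1 - l = r/(d+r)" using dpos r by (simp add: l_def field_simps)
  have "l *\<^sub>R z + (1 - l) *\<^sub>R y = x"
  proof -
    define a where "a = d/(d+r)"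
    define b where "b = r/(d+r)"
    have ab: "a + b = 1"
    proof -
      have "a + b = (d + r)/(d+r)" unfolding a_def b_def by (rule add_divide_distrib[symmetric])
      thus ?thesis using dpos r by simp
    qed
    have arb: "a * (r/d) = b"
    proof -
      have "a * (r/d) = (d*r)/(d*(d+r))" by (simp add: a_def)
      also have "\<dots> = r/(d+r)" using dpos by simp
      finally show ?thesis by (simp add: b_def)
    qed
    have "l *\<^sub>R z + (1 - l) *\<^sub>R y = a *\<^sub>R x + (a * (r/d)) *\<^sub>R (x - y) + b *\<^sub>R y"
      using \<open>1 - l = r/(d+r)\<close> by (simp add: z_def l_def a_def b_def scaleR_add_right)
    also have "\<dots> = a *\<^sub>R x + b *\<^sub>R x" unfolding arb by (simp add: scaleR_diff_right)
    also have "\<dots> = x" by (simp add: scaleR_add_left[symmetric] ab)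
    finally show ?thesis .
  qed
  hence "S x \<le> l *\<^sub>R S z + (1 - l) *\<^sub>R S y"
    using conv l01 unfolding convex_operator_def by metis
  hence "S x - S y \<le> l *\<^sub>R S z + (1 - l) *\<^sub>R S y - S y" by (rule diff_right_mono)
  also have "l *\<^sub>R S z + (1 - l) *\<^sub>R S y - S y = l *\<^sub>R (S z - S y)"
    by (simp add: algebra_simps)
  finally show ?thesis by (simp add: z_def l_def)
qed

theorem corollaryA4:
  fixes S :: "'a::banach_lattice \<Rightarrow> 'b::banach_lattice"
  assumes "bounded_operator S" and "convex_operator S"
  shows "\<forall>r>0. \<exists>L>0. \<forall>x y. norm x \<le> r \<and> norm y \<le> r \<longrightarrow>
            norm (S x - S y) \<le> L * norm (x - y)"
proof (intro allI impI)
  fix r :: real assume r: "0 < r"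
  obtain M where M: "\<And>x. norm x \<le> 2*r \<Longrightarrow> norm (S x) \<le> M"
  proof -
    have "0 < 2*r" using r by simp
    thus ?thesis using that assms(1) unfolding bounded_operator_def by blast
  qed
  have "norm (S 0) \<le> M" using M r by simp
  hence M0: "0 \<le> M" by (rule order_trans[OF norm_ge_zero])
  define L where "L = (4*M + 1)/r"
  have Lpos: "0 < L" using M0 r by (simp add: L_def)
  show "\<exists>L>0. \<forall>x y. norm x \<le> r \<and> norm y \<le> r \<longrightarrow> norm (S x - S y) \<le> L * norm (x - y)"
  proof (intro exI conjI allI impI, rule Lpos)
    fix x y :: 'a assume xy: "norm x \<le> r \<and> norm y \<le> r"
    define d where "d = norm (x - y)"
    show "norm (S x - S y) \<le> L * norm (x - y)"
    proof (cases "d = 0")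
      case True thus ?thesis by (simp add: d_def)
    next
      case False
      hence dpos: "0 < d" by (simp add: d_def)
      have dle: "d \<le> 2*r" unfolding d_def using xy norm_triangle_ineq4[of x y] by linarith
      define z where "z = x + (r/d) *\<^sub>R (x - y)"
      define w where "w = y + (r/d) *\<^sub>R (y - x)"
      have nz: "norm z \<le> 2*r"
      proof -
        have "norm z \<le> norm x + norm ((r/d) *\<^sub>R (x - y))" unfolding z_def by (rule norm_triangle_ineq)
        also have "norm ((r/d) *\<^sub>R (x - y)) = r" using dpos r by (simp add: d_def)
        finally show ?thesis using xy by linarith
      qed
      have nw: "norm w \<le> 2*r"
      proof -
        have "norm w \<le> norm y + norm ((r/d) *\<^sub>R (y - x))" unfolding w_def by (rule norm_triangle_ineq)
        also have "norm ((r/d) *\<^sub>R (y - x)) = r" using dpos r by (simp add: d_def norm_minus_commute)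
        finally show ?thesis using xy by linarith
      qed
      have h1: "S x - S y \<le> (d/(d+r)) *\<^sub>R (S z - S y)"
        using one_side[OF assms(2) d_def dpos r] by (simp add: z_def)
      have h2: "S y - S x \<le> (d/(d+r)) *\<^sub>R (S w - S x)"
        using one_side[OF assms(2) _ dpos r, of y x] by (simp add: w_def d_def norm_minus_commute)
      have h2': "- ((d/(d+r)) *\<^sub>R (S w - S x)) \<le> S x - S y"
        using h2 by (simp add: minus_le_iff)
      have key: "norm (S x - S y) \<le> norm ((d/(d+r)) *\<^sub>R (S z - S y)) + norm ((d/(d+r)) *\<^sub>R (S w - S x))"
        by (rule bl_key[OF h1 h2'])
      have lam: "0 \<le> d/(d+r)" "d/(d+r) \<le> d/r" using dpos r by (auto simp: frac_le)
      have yr: "norm y \<le> 2*r" and xr: "norm x \<le> 2*r" using xy r by linarith+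
      have b1: "norm (S z - S y) \<le> 2*M"
      proof -
        have "norm (S z - S y) \<le> norm (S z) + norm (S y)" by (rule norm_triangle_ineq4)
        thus ?thesis using M[OF nz] M[OF yr] by linarith
      qed
      have b2: "norm (S w - S x) \<le> 2*M"
      proof -
        have "norm (S w - S x) \<le> norm (S w) + norm (S x)" by (rule norm_triangle_ineq4)
        thus ?thesis using M[OF nw] M[OF xr] by linarith
      qed
      have "norm ((d/(d+r)) *\<^sub>R (S z - S y)) = (d/(d+r)) * norm (S z - S y)"
        using dpos r by simp
      also have "\<dots> \<le> (d/r) * (2*M)"
        by (rule mult_mono[OF lam(2) b1]) (use dpos r in auto)
      finally have c1: "norm ((d/(d+r)) *\<^sub>R (S z - S y)) \<le> (d/r) * (2*M)" .
      have "norm ((d/(d+r)) *\<^sub>R (S w - S x)) = (d/(d+r)) * norm (S w - S x)"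
        using dpos r by simp
      also have "\<dots> \<le> (d/r) * (2*M)"
        by (rule mult_mono[OF lam(2) b2]) (use dpos r in auto)
      finally have c2: "norm ((d/(d+r)) *\<^sub>R (S w - S x)) \<le> (d/r) * (2*M)" .
      note c1 c2
      have "(d/r) * (4*M) = (d/r) * (2*M) + (d/r) * (2*M)" by (simp add: algebra_simps)
      moreover have "norm (S x - S y) \<le> (d/r) * (2*M) + (d/r) * (2*M)"
        by (rule order_trans[OF key add_mono[OF c1 c2]])
      ultimately have "norm (S x - S y) \<le> (d/r) * (4*M)" by (simp only:)
      also have "\<dots> \<le> L * d" using dpos r by (simp add: L_def field_simps)
      finally show ?thesis by (simp add: d_def)
    qed
  qed
qed

end
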